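(* For all integers $n\ge 1$ and $r\ge 1$, $$\sum_{k=1}^n {(-1)^k\over k^r}{n\choose k}{n+k\choose k}=-\sum_{d=1}^r 2^d\sum_{\substack{{\bf s}=(s_1,\dots,s_d)\\ |{\bf s}|=r}} H_n(s_1,s_2,\dots,s_d),$$ where the inner sum runs over all vectors ${\bf s}=(s_1,\dots,s_d)$ of positive integers with $s_1+\cdots+s_d=r$.
   Context: For a vector ${\bf s}=(s_1,\dots,s_d)$ of positive integers, $|{\bf s}|=\sum_{i=1}^d s_i$, and the multiple harmonic sum is $H_n(s_1,\dots,s_d)=\sum_{1\le k_1<k_2<\cdots<k_d\le n}\frac{1}{k_1^{s_1}k_2^{s_2}\cdots k_d^{s_d}}$. *)

theory Defs
  imports Complex_Main
begin

definition mhs :: "nat \<Rightarrow> nat list \<Rightarrow> real" where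
  "mhs n s = (\<Sum>ks \<in> {ks :: nat list. length ks = length s \<and> sorted_wrt (<) ks \<and> set ks \<subseteq> {1..n}}.
               \<Prod>i<length s. 1 / (real (ks ! i) ^ (s ! i)))"

definition compositions :: "nat \<Rightarrow> nat \<Rightarrow> nat list set" where
  "compositions r d = {s :: nat list. length s = d \<and> (\<forall>x\<in>set s. 0 < x) \<and> sum_list s = r}"

end

theory Submission
  imports Defs
begin

definition A :: "nat \<Rightarrow> nat \<Rightarrow> real" where
  "A n k = (\<Prod>j=1..n. real j + real k) /
     ((\<Prod>j=1..k-1. real j - real k) * (\<Prod>j=k+1..n. real j - real k))"

lemma prodL_nz: "(\<Prod>j=1..k-1. real j - real k) \<noteq> 0"
  by (subst prod_zero_iff) auto

lemma prodR_nz: "(\<Prod>j=k+1..n. real j - real k) \<noteq> 0"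
  by (subst prod_zero_iff) auto

lemma A_Suc:
  assumes "1 \<le> k" "k \<le> n"
  shows "A (Suc n) k = A n k * (real (Suc n) + real k) / (real (Suc n) - real k)"
proof -
  have "(\<Prod>j=k+1..Suc n. real j - real k) = (\<Prod>j=k+1..n. real j - real k) * (real (Suc n) - real k)"
    using assms by simp
  moreover have "(\<Prod>j=1..Suc n. real j + real k) = (\<Prod>j=1..n. real j + real k) * (real (Suc n) + real k)"
    by simp
  moreover have "real (Suc n) - real k \<noteq> 0" using assms by simp
  ultimately show ?thesis unfolding A_def using prodL_nz[of k] prodR_nz[of k n]
    by (simp only:) (simp add: field_simps del: prod.cl_ivl_Suc)
qed

lemma A_diag:
  "A (Suc n) (Suc n) = 2 * real (Suc n) * (\<Prod>j=1..n. (real j + real (Suc n)) / (real j - real (Suc n)))"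
proof -
  have "(\<Prod>j=1..Suc n. real j + real (Suc n)) = (\<Prod>j=1..n. real j + real (Suc n)) * (2 * real (Suc n))"
    by simp
  moreover have "(\<Prod>j=Suc n+1..Suc n. real j - real (Suc n)) = 1" by simp
  ultimately show ?thesis unfolding A_def prod_dividef by simp
qed

lemma pf_term:
  fixes a k N x :: real
  assumes "N \<noteq> x" "k \<noteq> x" "N \<noteq> k"
  shows "a / (k - x) * ((N + x) / (N - x)) = a * (N + k) / (N - k) / (k - x) + 2 * N * (a / (k - N)) / (N - x)"
proof -
  have h: "N - x \<noteq> 0" "k - x \<noteq> 0" "k - N \<noteq> 0" "N - k \<noteq> 0" using assms by auto
  show ?thesis using h by (simp add: divide_simps) (simp add: algebra_simps)
qed

lemma PF:
  fixes x :: real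
  assumes "\<forall>k\<in>{1..n}. x \<noteq> real k"
  shows "(\<Prod>k=1..n. (real k + x) / (real k - x)) = (-1)^n + (\<Sum>k=1..n. A n k / (real k - x))"
  using assms
proof (induction n arbitrary: x)
  case 0
  then show ?case by simp
next
  case (Suc n)
  define N where "N = real (Suc n)"
  have "Suc n \<in> {1..Suc n}" by simp
  then have xN: "x \<noteq> N" using Suc.prems N_def by blast
  have IHx: "(\<Prod>k=1..n. (real k + x) / (real k - x)) = (-1)^n + (\<Sum>k=1..n. A n k / (real k - x))"
    using Suc.IH Suc.prems by auto
  have IHN: "(\<Prod>k=1..n. (real k + N) / (real k - N)) = (-1)^n + (\<Sum>k=1..n. A n k / (real k - N))"
    using Suc.IH unfolding N_def by auto
  have tm: "A n k / (real k - x) * ((N + x) / (N - x)) =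
      A n k * (N + real k) / (N - real k) / (real k - x) + 2 * N * (A n k / (real k - N)) / (N - x)"
    if "k \<in> {1..n}" for k
  proof -
    have "real k \<noteq> N" "real k \<noteq> x" using that Suc.prems N_def by auto
    then show ?thesis using xN by (intro pf_term) auto
  qed
  have "(\<Prod>k=1..Suc n. (real k + x) / (real k - x)) = (\<Prod>k=1..n. (real k + x) / (real k - x)) * ((N + x) / (N - x))"
    by (simp add: N_def)
  also have "\<dots> = (-1)^n * ((N + x) / (N - x)) + (\<Sum>k=1..n. A n k / (real k - x) * ((N + x) / (N - x)))"
    by (simp only: IHx distrib_right sum_distrib_right)
  also have "\<dots> = (-1)^n * ((N + x) / (N - x)) + (\<Sum>k=1..n. A n k * (N + real k) / (N - real k) / (real k - x))
       + 2 * N * (\<Sum>k=1..n. A n k / (real k - N)) / (N - x)"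
  proof -
    have s1: "(\<Sum>k=1..n. A n k / (real k - x) * ((N + x) / (N - x))) = (\<Sum>k=1..n. A n k * (N + real k) / (N - real k) / (real k - x)) + (\<Sum>k=1..n. 2 * N * (A n k / (real k - N)) / (N - x))"
      by (subst sum.distrib[symmetric], rule sum.cong, rule refl, rule tm)
    have s2: "(\<Sum>k=1..n. 2 * N * (A n k / (real k - N)) / (N - x)) = 2 * N * (\<Sum>k=1..n. A n k / (real k - N)) / (N - x)"
      by (simp add: sum_distrib_left sum_divide_distrib)
    show ?thesis by (simp only: s1 s2 add.assoc)
  qed
  also have "(-1)^n * ((N + x) / (N - x)) = (-1) ^ Suc n + 2 * N * (-1)^n / (N - x)"
    using xN by (simp add: field_simps)
  also have "(\<Sum>k=1..n. A n k * (N + real k) / (N - real k) / (real k - x)) = (\<Sum>k=1..n. A (Suc n) k / (real k - x))"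
    by (rule sum.cong) (auto simp: A_Suc N_def)
  finally have "(\<Prod>k=1..Suc n. (real k + x) / (real k - x)) = (-1) ^ Suc n + (\<Sum>k=1..n. A (Suc n) k / (real k - x))
     + 2 * N * ((-1)^n + (\<Sum>k=1..n. A n k / (real k - N))) / (N - x)"
    by (simp add: distrib_left add_divide_distrib)
  also have "2 * N * ((-1)^n + (\<Sum>k=1..n. A n k / (real k - N))) / (N - x) = A (Suc n) (Suc n) / (real (Suc n) - x)"
    by (simp only: A_diag N_def[symmetric] IHN)
  finally show ?case by simp
qed



definition g :: "nat \<Rightarrow> nat \<Rightarrow> real" where
  "g n r = (if r = 0 then (-1)^n else 0) + (\<Sum>k=1..n. A n k * (1 / real k) ^ (r+1))"

lemma g_n0: "g n 0 = 1"
proof -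
  have "(\<Prod>k=1..n. (real k + 0) / (real k - 0)) = (-1)^n + (\<Sum>k=1..n. A n k / (real k - 0))"
    by (rule PF) auto
  moreover have "(\<Prod>k=1..n. (real k + 0) / (real k - 0)) = 1" by (rule prod.neutral) auto
  ultimately show ?thesis unfolding g_def by simp
qed

lemma g_0r: "r \<ge> 1 \<Longrightarrow> g 0 r = 0"
  unfolding g_def by simp

lemma geomP:
  fixes a b :: real
  shows "(a - b) * (\<Sum>m=1..r. a^(r-m+1)*b^m) = a*b*(a^r - b^r)"
proof (induction r)
  case 0 then show ?case by simp
next
  case (Suc r)
  have "(\<Sum>m=1..Suc r. a^(Suc r-m+1)*b^m) = (\<Sum>m=1..r. a^(Suc r-m+1)*b^m) + a*b^(Suc r)" by simp
  also have "(\<Sum>m=1..r. a^(Suc r-m+1)*b^m) = a * (\<Sum>m=1..r. a^(r-m+1)*b^m)"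
    unfolding sum_distrib_left by (rule sum.cong) (auto simp: Suc_diff_le)
  finally have "(a - b) * (\<Sum>m=1..Suc r. a^(Suc r-m+1)*b^m) = a * ((a - b) * (\<Sum>m=1..r. a^(r-m+1)*b^m)) + (a-b)*a*b^(Suc r)"
    by (simp add: algebra_simps)
  also have "\<dots> = a*b*(a^Suc r - b^Suc r)" unfolding Suc.IH by (simp add: algebra_simps)
  finally show ?case .
qed

lemma per_ab:
  fixes a b :: real
  assumes "a \<noteq> b"
  shows "(a+b)/(a-b)*a^(r+1) + 2*b^r*(-(a*b)/(a-b)) = a^(r+1) + 2*(\<Sum>m=1..r. a^(r-m+1)*b^m)"
proof -
  have d: "a - b \<noteq> 0" using assms by simp
  have S: "(\<Sum>m=1..r. a^(r-m+1)*b^m) = a*b*(a^r - b^r)/(a-b)"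
    using geomP[of a b r] d by (simp add: field_simps)
  show ?thesis unfolding S using d by (simp add: divide_simps) (simp add: algebra_simps)
qed

lemma per_k:
  fixes k N :: real
  assumes "k \<noteq> 0" "N \<noteq> 0" "k \<noteq> N"
  shows "(N + k) / (N - k) * (1/k)^(r+1) + 2 * (1/N)^r * (1 / (k - N)) =
         (1/k)^(r+1) + 2 * (\<Sum>m=1..r. (1/k)^(r-m+1)*(1/N)^m)"
proof -
  have ab: "1/k \<noteq> 1/N" using assms by simp
  have e1: "(N + k) / (N - k) = (1/k + 1/N)/(1/k - 1/N)" using assms
    by (simp add: field_simps)
  have e2: "1 / (k - N) = -((1/k)*(1/N))/(1/k - 1/N)" using assms
    by (simp add: field_simps)
  show ?thesis unfolding e1 e2 by (rule per_ab[OF ab])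
qed

lemma g_step:
  assumes r: "r \<ge> 1"
  shows "g (Suc n) r = g n r + 2 * (\<Sum>m=1..r. g n (r - m) * (1 / real (Suc n)) ^ m)"
proof -
  define N where "N = real (Suc n)"
  have N0: "N \<noteq> 0" by (simp add: N_def)
  have IHN: "(\<Prod>k=1..n. (real k + N) / (real k - N)) = (-1)^n + (\<Sum>k=1..n. A n k / (real k - N))"
    by (rule PF) (auto simp: N_def)
  have diag: "A (Suc n) (Suc n) = 2 * N * ((-1)^n + (\<Sum>k=1..n. A n k / (real k - N)))"
    by (simp only: A_diag N_def[symmetric] IHN)
  have L: "g (Suc n) r = (\<Sum>k=1..n. A n k * ((N + real k) / (N - real k) * (1 / real k) ^ (r+1)))
             + 2 * ((-1)^n + (\<Sum>k=1..n. A n k / (real k - N))) * (1 / N) ^ r"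
  proof -
    have "g (Suc n) r = (\<Sum>k=1..n. A (Suc n) k * (1 / real k) ^ (r+1)) + A (Suc n) (Suc n) * (1 / N) ^ (r+1)"
      using r by (simp add: g_def N_def)
    also have "(\<Sum>k=1..n. A (Suc n) k * (1 / real k) ^ (r+1)) = (\<Sum>k=1..n. A n k * ((N + real k) / (N - real k) * (1 / real k) ^ (r+1)))"
      by (rule sum.cong) (auto simp: A_Suc N_def)
    also have "A (Suc n) (Suc n) * (1 / N) ^ (r+1) = 2 * ((-1)^n + (\<Sum>k=1..n. A n k / (real k - N))) * (1 / N) ^ r"
      using N0 by (simp add: diag)
    finally show ?thesis .
  qed
  have S1: "(\<Sum>m=1..r. (if r - m = 0 then (-1)^n else 0) * (1 / N) ^ m) = (-1)^n * (1 / N) ^ r"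
  proof -
    have "(\<Sum>m=1..r. (if r - m = 0 then (-1)^n else 0) * (1 / N) ^ m) = (\<Sum>m=1..r. if m = r then (-1)^n * (1 / N) ^ m else 0)"
      by (rule sum.cong) auto
    also have "\<dots> = (-1)^n * (1 / N) ^ r" using r by (simp add: sum.delta')
    finally show ?thesis .
  qed
  have S2: "(\<Sum>m=1..r. (\<Sum>k=1..n. A n k * (1 / real k) ^ (r - m + 1)) * (1 / N) ^ m)
      = (\<Sum>k=1..n. A n k * (\<Sum>m=1..r. (1 / real k) ^ (r - m + 1) * (1 / N) ^ m))"
    unfolding sum_distrib_right sum_distrib_left mult.assoc
    by (rule sum.swap)
  have G: "(\<Sum>m=1..r. g n (r - m) * (1 / N) ^ m) = (\<Sum>m=1..r. (if r - m = 0 then (-1)^n else 0) * (1 / N) ^ m)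
        + (\<Sum>m=1..r. (\<Sum>k=1..n. A n k * (1 / real k) ^ (r - m + 1)) * (1 / N) ^ m)"
    unfolding g_def distrib_right sum.distrib by simp
  have R: "g n r + 2 * (\<Sum>m=1..r. g n (r - m) * (1 / N) ^ m) =
       (\<Sum>k=1..n. A n k * ((1 / real k) ^ (r+1) + 2 * (\<Sum>m=1..r. (1 / real k) ^ (r - m + 1) * (1 / N) ^ m)))
       + 2 * (-1)^n * (1 / N) ^ r"
    using r unfolding G S1 S2
    by (simp add: g_def distrib_left sum.distrib sum_distrib_left algebra_simps)
  have L2: "g (Suc n) r = (\<Sum>k=1..n. A n k * ((N + real k) / (N - real k) * (1 / real k) ^ (r+1) + 2 * (1 / N) ^ r * (1 / (real k - N))))
             + 2 * (-1)^n * (1 / N) ^ r"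
    unfolding L by (simp add: distrib_left distrib_right sum.distrib sum_distrib_left sum_distrib_right algebra_simps)
  have "g (Suc n) r = g n r + 2 * (\<Sum>m=1..r. g n (r - m) * (1 / N) ^ m)"
    unfolding L2 R
    by (intro arg_cong2[where f="(+)"] refl sum.cong arg_cong2[where f="(*)"] per_k) (auto simp: N_def)
  then show ?thesis by (simp add: N_def)
qed



lemma prodA1: "(\<Prod>j=1..n. real j + real k) = fact (n + k) / fact k"
proof (induction n)
  case 0 then show ?case by simp
next
  case (Suc n)
  have "(\<Prod>j=1..Suc n. real j + real k) = fact (n + k) / fact k * (real (Suc n) + real k)"
    using Suc.IH by simp
  moreover have "fact (Suc n + k) = (real (Suc n) + real k) * (fact (n + k) :: real)"
    by (simp add: fact_Suc)
  ultimately show ?case by simp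
qed

lemma prodA2: "k \<le> n \<Longrightarrow> (\<Prod>j=k+1..n. real j - real k) = fact (n - k)"
proof (induction n rule: dec_induct)
  case base then show ?case by simp
next
  case (step n)
  have "(\<Prod>j=k+1..Suc n. real j - real k) = (\<Prod>j=k+1..n. real j - real k) * (real (Suc n) - real k)"
    using step by simp
  also have "\<dots> = fact (n - k) * real (Suc (n - k))" using step by (simp add: of_nat_diff)
  also have "\<dots> = fact (Suc n - k)" using step by (simp add: Suc_diff_le)
  finally show ?case .
qed

lemma prodA3: "m < c \<Longrightarrow> (\<Prod>j=1..m. real j - real c) = (-1)^m * fact (c - 1) / fact (c - 1 - m)"
proof (induction m)
  case 0 then show ?case by simp
next
  case (Suc m)
  have f: "fact (c - 1 - m) = real (c - 1 - m) * fact (c - 1 - Suc m)"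
    using Suc.prems by (metis Suc_diff_Suc diff_Suc_eq_diff_pred fact_Suc zero_less_diff)
  have "(\<Prod>j=1..Suc m. real j - real c) = (\<Prod>j=1..m. real j - real c) * (real (Suc m) - real c)" by simp
  also have "\<dots> = (-1)^m * fact (c - 1) / fact (c - 1 - m) * (real (Suc m) - real c)"
    using Suc by simp
  also have "real (Suc m) - real c = - real (c - 1 - m)" using Suc.prems by (simp add: of_nat_diff)
  moreover have "real (c - 1 - m) \<noteq> 0" using Suc.prems by simp
  moreover have "(fact (c - 1 - Suc m) :: real) \<noteq> 0" by simp
  moreover have "\<And>d G F :: real. d \<noteq> 0 \<Longrightarrow> G \<noteq> 0 \<Longrightarrow> (-1)^m*F/(d*G)*(-d) = (-1)^Suc m * F/G"
    by (simp add: field_simps)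
  ultimately show ?case unfolding f by metis
qed

lemma A_closed:
  assumes "1 \<le> k" "k \<le> n"
  shows "A n k = (-1)^(k-1) * real k * real (n choose k) * real ((n + k) choose k)"
proof -
  have L: "(\<Prod>j=1..k-1. real j - real k) = (-1)^(k-1) * fact (k - 1)"
    using prodA3[of "k-1" k] assms by simp
  have b1: "real (n choose k) = fact n / (fact k * fact (n - k))" using assms by (simp add: binomial_fact)
  have b2: "real ((n + k) choose k) = fact (n + k) / (fact k * fact n)" using binomial_fact[of k "n+k"] by simp
  have fk: "fact k = real k * (fact (k - 1) :: real)" using assms by (simp add: fact_reduce)
  have nz: "(fact (k-1)::real) \<noteq> 0" "(fact (n-k)::real) \<noteq> 0" "(fact n::real) \<noteq> 0" "real k \<noteq> 0" using assms by auto
  show ?thesis unfolding A_def prodA1 L prodA2[OF assms(2)] b1 b2 fk using nz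
    by (simp add: field_simps)
qed



definition I :: "nat \<Rightarrow> nat \<Rightarrow> nat list set" where
  "I n l = {ks. length ks = l \<and> sorted_wrt (<) ks \<and> set ks \<subseteq> {1..n}}"

lemma mhs_I: "mhs n s = (\<Sum>ks \<in> I n (length s). \<Prod>i<length s. 1 / (real (ks ! i) ^ (s ! i)))"
  unfolding mhs_def I_def by simp

lemma finI: "finite (I n l)"
  by (rule finite_subset[OF _ finite_lists_length_eq[of "{1..n}" l]]) (auto simp: I_def)

lemma I_Suc: "I (Suc n) (Suc l) = I n (Suc l) \<union> (\<lambda>ks. ks @ [Suc n]) ` I n l"
proof (rule set_eqI, rule iffI)
  fix ks assume ks: "ks \<in> I (Suc n) (Suc l)"
  show "ks \<in> I n (Suc l) \<union> (\<lambda>ks. ks @ [Suc n]) ` I n l"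
  proof (cases "Suc n \<in> set ks")
    case False
    then have "set ks \<subseteq> {1..n}" using ks by (auto simp: I_def le_Suc_eq)
    then show ?thesis using ks by (auto simp: I_def)
  next
    case True
    obtain ks' b where kb: "ks = ks' @ [b]" using ks by (cases ks rule: rev_exhaust) (auto simp: I_def)
    have sw: "sorted_wrt (<) ks'" "\<forall>x\<in>set ks'. x < b" using ks kb by (auto simp: I_def sorted_wrt_append)
    have bn: "b \<le> Suc n" using ks kb by (auto simp: I_def)
    have "b = Suc n"
    proof (rule ccontr)
      assume "b \<noteq> Suc n"
      then have "Suc n \<in> set ks'" using True kb by auto
      then show False using sw bn by fastforce
    qed
    have "set ks' \<subseteq> {1..n}" using ks kb sw \<open>b = Suc n\<close> by (fastforce simp: I_def less_Suc_eq_le)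
    then have "ks' \<in> I n l" using ks kb sw by (auto simp: I_def)
    then show ?thesis using kb \<open>b = Suc n\<close> by blast
  qed
next
  fix ks assume "ks \<in> I n (Suc l) \<union> (\<lambda>ks. ks @ [Suc n]) ` I n l"
  then show "ks \<in> I (Suc n) (Suc l)"
    by (auto simp: I_def sorted_wrt_append) (meson atLeastAtMost_iff le_imp_less_Suc subsetD)+
qed

lemma mhs_step: "mhs (Suc n) (s @ [a]) = mhs n (s @ [a]) + mhs n s * (1 / real (Suc n)) ^ a"
proof -
  define f where "f = (\<lambda>ks. \<Prod>i<Suc (length s). 1 / (real (ks ! i) ^ ((s @ [a]) ! i)))"
  have disj: "I n (Suc (length s)) \<inter> (\<lambda>ks. ks @ [Suc n]) ` I n (length s) = {}"
    by (auto simp: I_def)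
  have inj: "inj_on (\<lambda>ks. ks @ [Suc n]) (I n (length s))" by (auto simp: inj_on_def)
  have "mhs (Suc n) (s @ [a]) = sum f (I (Suc n) (Suc (length s)))"
    unfolding mhs_I f_def by simp
  also have "\<dots> = sum f (I n (Suc (length s))) + sum f ((\<lambda>ks. ks @ [Suc n]) ` I n (length s))"
    unfolding I_Suc by (rule sum.union_disjoint[OF finI _ disj]) (simp add: finI)
  also have "sum f (I n (Suc (length s))) = mhs n (s @ [a])" unfolding mhs_I f_def by simp
  also have "sum f ((\<lambda>ks. ks @ [Suc n]) ` I n (length s)) = (\<Sum>ks\<in>I n (length s). f (ks @ [Suc n]))"
    by (rule sum.reindex[OF inj, unfolded comp_def])
  also have "\<dots> = (\<Sum>ks\<in>I n (length s). (\<Prod>i<length s. 1 / (real (ks ! i) ^ (s ! i))) * (1 / real (Suc n)) ^ a)"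
  proof (rule sum.cong[OF refl])
    fix ks assume "ks \<in> I n (length s)"
    then have l: "length ks = length s" by (simp add: I_def)
    have "f (ks @ [Suc n]) = (\<Prod>i<length s. 1 / (real ((ks @ [Suc n]) ! i) ^ ((s @ [a]) ! i))) * (1 / real (Suc n) ^ a)"
      unfolding f_def using l by (simp add: nth_append)
    also have "(\<Prod>i<length s. 1 / (real ((ks @ [Suc n]) ! i) ^ ((s @ [a]) ! i))) = (\<Prod>i<length s. 1 / (real (ks ! i) ^ (s ! i)))"
      by (rule prod.cong) (auto simp: nth_append l)
    finally show "f (ks @ [Suc n]) = (\<Prod>i<length s. 1 / (real (ks ! i) ^ (s ! i))) * (1 / real (Suc n)) ^ a"
      by (simp add: power_one_over)
  qed
  also have "\<dots> = mhs n s * (1 / real (Suc n)) ^ a" unfolding mhs_I sum_distrib_right ..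
  finally show ?thesis .
qed

lemma mhs_nil: "mhs n [] = 1"
proof -
  have "I n 0 = {[]}" by (auto simp: I_def)
  then show ?thesis unfolding mhs_I by simp
qed

lemma mhs_0: "s \<noteq> [] \<Longrightarrow> mhs 0 s = 0"
proof -
  assume "s \<noteq> []"
  then have "I 0 (length s) = {}" by (auto simp: I_def)
  then show ?thesis unfolding mhs_I by simp
qed

lemma len_le_sum: "\<forall>x\<in>set s. 0 < x \<Longrightarrow> length s \<le> sum_list s"
  by (induction s) auto

lemma comp_empty: "r < d \<Longrightarrow> compositions r d = {}"
  unfolding compositions_def using len_le_sum by fastforce

lemma comp_00: "compositions 0 0 = {[]}"
  unfolding compositions_def by auto

lemma comp_r0: "0 < r \<Longrightarrow> compositions r 0 = {}"
  unfolding compositions_def by auto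

lemma fin_comp: "finite (compositions r d)"
  by (rule finite_subset[OF _ finite_lists_length_eq[of "{0..r}" d]])
     (auto simp: compositions_def member_le_sum_list)

lemma comp_split_set:
  "compositions r (Suc d) = (\<lambda>(a, s). s @ [a]) ` (SIGMA a:{1..r}. compositions (r - a) d)"
proof (rule set_eqI, rule iffI)
  fix t assume t: "t \<in> compositions r (Suc d)"
  obtain s a where sa: "t = s @ [a]" using t by (cases t rule: rev_exhaust) (auto simp: compositions_def)
  have "a \<in> {1..r}" "s \<in> compositions (r - a) d" using t sa by (auto simp: compositions_def)
  then show "t \<in> (\<lambda>(a, s). s @ [a]) ` (SIGMA a:{1..r}. compositions (r - a) d)"
    using sa by force
next
  fix t assume "t \<in> (\<lambda>(a, s). s @ [a]) ` (SIGMA a:{1..r}. compositions (r - a) d)"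
  then show "t \<in> compositions r (Suc d)" by (auto simp: compositions_def)
qed

lemma comp_split:
  "(\<Sum>t\<in>compositions r (Suc d). F t) = (\<Sum>a=1..r. \<Sum>s\<in>compositions (r - a) d. F (s @ [a]))"
proof -
  have inj: "inj_on (\<lambda>(a, s). s @ [a]) (SIGMA a:{1..r}. compositions (r - a) d)"
    by (auto simp: inj_on_def)
  show ?thesis unfolding comp_split_set sum.reindex[OF inj]
    by (simp add: sum.Sigma fin_comp split_beta)
qed

definition W :: "nat \<Rightarrow> nat \<Rightarrow> real" where
  "W n r = (\<Sum>d\<le>r. 2 ^ d * (\<Sum>s\<in>compositions r d. mhs n s))"

lemma W_ext: "r \<le> M \<Longrightarrow> W n r = (\<Sum>d\<le>M. 2 ^ d * (\<Sum>s\<in>compositions r d. mhs n s))"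
  unfolding W_def
  by (rule sum.mono_neutral_left) (auto simp: comp_empty)

lemma W_n0: "W n 0 = 1"
  unfolding W_def by (simp add: comp_00 mhs_nil)

lemma W_0r: "r \<ge> 1 \<Longrightarrow> W 0 r = 0"
  unfolding W_def
proof (rule sum.neutral, rule ballI)
  fix d assume r: "r \<ge> 1"
  show "2 ^ d * (\<Sum>s\<in>compositions r d. mhs 0 s) = 0"
  proof (cases "d = 0")
    case True then show ?thesis using r by (simp add: comp_r0)
  next
    case False
    have "mhs 0 s = 0" if "s \<in> compositions r d" for s
      using that False by (intro mhs_0) (auto simp: compositions_def)
    then show ?thesis by simp
  qed
qed

lemma W_step:
  assumes r: "r \<ge> 1"
  shows "W (Suc n) r = W n r + 2 * (\<Sum>m=1..r. W n (r - m) * (1 / real (Suc n)) ^ m)"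
proof -
  obtain q where q: "r = Suc q" using r by (cases r) auto
  define b where "b = 1 / real (Suc n)"
  define C where "C = (\<lambda>n r d. \<Sum>s\<in>compositions r d. mhs n s)"
  have Wq: "W n' r = (\<Sum>d\<le>q. 2 ^ Suc d * C n' r (Suc d))" for n'
    unfolding W_def C_def q sum.atMost_Suc_shift by (simp add: comp_r0)
  have CS: "C (Suc n) r (Suc d) = C n r (Suc d) + (\<Sum>a=1..r. C n (r - a) d * b ^ a)" for d
    unfolding C_def comp_split mhs_step b_def sum.distrib sum_distrib_right ..
  have "W (Suc n) r = W n r + 2 * (\<Sum>d\<le>q. 2 ^ d * (\<Sum>a=1..r. C n (r - a) d * b ^ a))"
    unfolding Wq CS by (simp add: distrib_left sum.distrib sum_distrib_left algebra_simps)
  also have "(\<Sum>d\<le>q. 2 ^ d * (\<Sum>a=1..r. C n (r - a) d * b ^ a)) = (\<Sum>a=1..r. (\<Sum>d\<le>q. 2 ^ d * C n (r - a) d) * b ^ a)"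
    by (simp add: sum_distrib_left sum_distrib_right sum.swap[of _ "{..q}"] algebra_simps)
  also have "\<dots> = (\<Sum>a=1..r. W n (r - a) * b ^ a)"
  proof (rule sum.cong[OF refl])
    fix a assume "a \<in> {1..r}"
    then have "r - a \<le> q" using q by auto
    then show "(\<Sum>d\<le>q. 2 ^ d * C n (r - a) d) * b ^ a = W n (r - a) * b ^ a"
      by (simp add: W_ext[of "r - a" q n] C_def)
  qed
  finally show ?thesis by (simp add: b_def)
qed



lemma aux_gen:
  fixes x y K s :: real
  assumes "K \<noteq> 0"
  shows "(-s) / K ^ r * x * y = - ((s * K * x * y) * (1 / K) ^ (r+1))"
  using assms by (simp add: power_one_over field_simps)

lemma aux_term:
  fixes x y :: real
  assumes "k \<ge> 1"
  shows "(-1) ^ k / real k ^ r * x * y = - (((-1)^(k-1) * real k * x * y) * (1 / real k) ^ (r+1))"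
proof -
  obtain j where j: "k = Suc j" using assms by (cases k) auto
  have p: "(-1::real)^k = - ((-1)^(k-1))" using j by simp
  have "real k \<noteq> 0" using assms by simp
  then show ?thesis unfolding p by (rule aux_gen)
qed

lemma W_eq_g: "W n r = g n r"
proof (induction n arbitrary: r)
  case 0
  show ?case
  proof (cases "r = 0")
    case True then show ?thesis by (simp add: W_n0 g_n0)
  next
    case False then show ?thesis by (simp add: W_0r g_0r)
  qed
next
  case (Suc n)
  show ?case
  proof (cases "r = 0")
    case True then show ?thesis by (simp add: W_n0 g_n0)
  next
    case False
    then have r: "r \<ge> 1" by simp
    show ?thesis unfolding W_step[OF r] g_step[OF r] Suc.IH ..
  qed
qed

theorem theorem4p1:
  fixes n r :: nat
  assumes "n \<ge> 1" and "r \<ge> 1"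
  shows "(\<Sum>k=1..n. (-1) ^ k / real k ^ r * real (n choose k) * real ((n + k) choose k))
       = - (\<Sum>d=1..r. 2 ^ d * (\<Sum>s\<in>compositions r d. mhs n s))"
proof -
  have W1: "W n r = (\<Sum>d=1..r. 2 ^ d * (\<Sum>s\<in>compositions r d. mhs n s))"
  proof -
    have "{..r} = insert 0 {1..r}" by auto
    then show ?thesis unfolding W_def using assms(2) by (simp add: comp_r0)
  qed
  have g1: "g n r = (\<Sum>k=1..n. A n k * (1 / real k) ^ (r+1))"
    unfolding g_def using assms(2) by simp
  have "(\<Sum>k=1..n. (-1) ^ k / real k ^ r * real (n choose k) * real ((n + k) choose k))
      = - (\<Sum>k=1..n. A n k * (1 / real k) ^ (r+1))"
    unfolding sum_negf[symmetric]
  proof (rule sum.cong[OF refl])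
    fix k assume k: "k \<in> {1..n}"
    then have k1: "k \<ge> 1" "k \<le> n" by auto
    show "(-1) ^ k / real k ^ r * real (n choose k) * real ((n + k) choose k) = - (A n k * (1 / real k) ^ (r+1))"
      unfolding A_closed[OF k1] by (rule aux_term[OF k1(1)])
  qed
  then show ?thesis using W1 g1 W_eq_g[of n r] by simp
qed

end
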